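(* For every $j\in\mathbb{N}$, every $n\in\mathbb{N}$ and every $M\in\mathbb{R}^{n\times n}$, $$\|\mathcal{U}(M)\|_{S_{2^j}}\le 2^{j-1}\|M\|_{S_{2^j}}.$$
   Context: For $M\in\mathbb{R}^{n\times n}$ with singular values $\sigma_1(M)\ge\dots\ge\sigma_n(M)$, the Schatten norm is $\|M\|_{S_p}:=(\sum_{m=1}^n\sigma_m(M)^p)^{1/p}$ for $1\le p<\infty$ and $\|M\|_{S_\infty}:=\sigma_1(M)$ (spectral norm). The upper triangular truncation is $\mathcal{U}(M)_{ij}:=M_{ij}$ if $i\le j$ and $0$ if $i>j$. *)

theory Defs
  imports "Jordan_Normal_Form.Matrix" "Jordan_Normal_Form.Char_Poly"
begin

definition singular_values :: "real mat \<Rightarrow> real multiset" where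
  "singular_values M = image_mset sqrt (proots (char_poly (transpose_mat M * M)))"

definition schatten_norm :: "real \<Rightarrow> real mat \<Rightarrow> real" where
  "schatten_norm p M = (\<Sum>\<^sub># (image_mset (\<lambda>s. s powr p) (singular_values M))) powr (1 / p)"

definition upper_trunc :: "real mat \<Rightarrow> real mat" where
  "upper_trunc M = mat (dim_row M) (dim_col M) (\<lambda>(i, j). if i \<le> j then M $$ (i, j) else 0)"

end

theory Submission
  imports Defs "Jordan_Normal_Form.Schur_Decomposition"
begin

lemma pow_mat_add: assumes "(A::real mat) \<in> carrier_mat n n"
  shows "A ^\<^sub>m (k + l) = A ^\<^sub>m k * A ^\<^sub>m l"
proof (induct l)
  case 0 then show ?case using assms by simp
next
  case (Suc l)
  have "A ^\<^sub>m (k + Suc l) = (A ^\<^sub>m k * A ^\<^sub>m l) * A" using Suc by simp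
  also have "\<dots> = A ^\<^sub>m k * (A ^\<^sub>m l * A)"
    using assms by (simp add: assoc_mult_mat[of _ n n _ n _ n])
  finally show ?case by simp
qed

lemma pow_mat_Suc_left: assumes "(A::real mat) \<in> carrier_mat n n"
  shows "A ^\<^sub>m (Suc k) = A * A ^\<^sub>m k"
  using pow_mat_add[OF assms, of 1 k] assms by simp

lemma pow_mat_mult: assumes "(A::real mat) \<in> carrier_mat n n"
  shows "A ^\<^sub>m (k * l) = (A ^\<^sub>m k) ^\<^sub>m l"
proof (induct l)
  case 0 then show ?case using assms by simp
next
  case (Suc l)
  have "A ^\<^sub>m (k * Suc l) = A ^\<^sub>m (k * l + k)" by (simp add: add.commute)
  also have "\<dots> = (A ^\<^sub>m k) ^\<^sub>m l * A ^\<^sub>m k" using pow_mat_add[OF assms] Suc by simp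
  finally show ?case by simp
qed

lemma transpose_pow: assumes "(A::real mat) \<in> carrier_mat n n"
  shows "transpose_mat (A ^\<^sub>m k) = (transpose_mat A) ^\<^sub>m k"
proof (induct k)
  case 0 then show ?case using assms by simp
next
  case (Suc k)
  have "transpose_mat (A ^\<^sub>m Suc k) = transpose_mat A * transpose_mat (A ^\<^sub>m k)"
    using assms by (simp add: transpose_mult[of _ n n _ n])
  also have "\<dots> = transpose_mat A * (transpose_mat A) ^\<^sub>m k" using Suc by simp
  also have "\<dots> = (transpose_mat A) ^\<^sub>m Suc k" using pow_mat_Suc_left[of "transpose_mat A" n k] assms by simp
  finally show ?case .
qed

lemma pow_shift: assumes "(A::real mat) \<in> carrier_mat n n" "B \<in> carrier_mat n n"
  shows "(A * B) ^\<^sub>m k * A = A * (B * A) ^\<^sub>m k"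
proof (induct k)
  case 0 then show ?case using assms by simp
next
  case (Suc k)
  have "(A * B) ^\<^sub>m Suc k * A = ((A * B) ^\<^sub>m k * A) * (B * A)"
    using assms by (simp add: assoc_mult_mat[of _ n n _ n _ n])
  also have "\<dots> = A * ((B * A) ^\<^sub>m k * (B * A))" unfolding Suc
    using assms by (simp add: assoc_mult_mat[of _ n n _ n _ n])
  finally show ?case by simp
qed

definition tr :: "real mat \<Rightarrow> real" where "tr A = (\<Sum>i<dim_row A. A $$ (i,i))"

lemma tr_mult_expand: assumes "A \<in> carrier_mat n n" "B \<in> carrier_mat n n"
  shows "tr (A * B) = (\<Sum>i<n. \<Sum>j<n. A $$ (i,j) * B $$ (j,i))"
  using assms unfolding tr_def by (auto simp: scalar_prod_def atLeast0LessThan intro!: sum.cong)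

lemma tr_comm: assumes "A \<in> carrier_mat n n" "B \<in> carrier_mat n n"
  shows "tr (A * B) = tr (B * A)"
  unfolding tr_mult_expand[OF assms] tr_mult_expand[OF assms(2,1)]
  by (subst sum.swap) (simp add: mult.commute)

lemma tr_transpose: "A \<in> carrier_mat n n \<Longrightarrow> tr (transpose_mat A) = tr A"
  unfolding tr_def by auto

lemma tr_add: "A \<in> carrier_mat n n \<Longrightarrow> B \<in> carrier_mat n n \<Longrightarrow> tr (A + B) = tr A + tr B"
  unfolding tr_def by (auto simp: sum.distrib)

lemma tr_ATA: assumes "A \<in> carrier_mat n n"
  shows "tr (transpose_mat A * A) = (\<Sum>i<n. \<Sum>j<n. (A $$ (j,i))^2)"
  using tr_mult_expand[of "transpose_mat A" n A] assms by (simp add: power2_eq_square)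

lemma sum_CS: fixes x y :: "'a \<Rightarrow> real"
  shows "(\<Sum>k\<in>K. x k * y k)^2 \<le> (\<Sum>k\<in>K. (x k)^2) * (\<Sum>k\<in>K. (y k)^2)"
proof -
  let ?A = "\<Sum>k\<in>K. (x k)^2" and ?B = "\<Sum>k\<in>K. (y k)^2" and ?C = "\<Sum>k\<in>K. x k * y k"
  have e1: "(\<Sum>k\<in>K. \<Sum>l\<in>K. (x k)^2 * (y l)^2) = ?A * ?B" by (simp add: sum_product)
  have e2: "(\<Sum>k\<in>K. \<Sum>l\<in>K. (x l)^2 * (y k)^2) = ?A * ?B" using e1 by (subst sum.swap) simp
  have e3: "(\<Sum>k\<in>K. \<Sum>l\<in>K. (x k * y k) * (x l * y l)) = ?C^2" by (simp add: sum_product power2_eq_square)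
  have e4: "(\<Sum>k\<in>K. \<Sum>l\<in>K. 2 * ((x k * y k) * (x l * y l))) = 2 * ?C^2"
    unfolding e3[symmetric] by (simp add: sum_distrib_left)
  have "0 \<le> (\<Sum>k\<in>K. \<Sum>l\<in>K. (x k * y l - x l * y k)^2)" by (intro sum_nonneg) auto
  also have "\<dots> = (\<Sum>k\<in>K. \<Sum>l\<in>K. (x k)^2 * (y l)^2 + (x l)^2 * (y k)^2 - 2 * ((x k * y k) * (x l * y l)))"
    by (intro sum.cong refl) (simp add: power2_eq_square algebra_simps)
  also have "\<dots> = 2 * (?A * ?B) - 2 * ?C^2"
    by (simp only: sum_subtractf sum.distrib e1 e2 e4)
  finally show ?thesis by simp
qed
lemma tr_ATB: assumes "X \<in> carrier_mat n n" "Y \<in> carrier_mat n n"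
  shows "tr (transpose_mat X * Y) = (\<Sum>p\<in>{..<n}\<times>{..<n}. X $$ (snd p, fst p) * Y $$ (snd p, fst p))"
  using tr_mult_expand[of "transpose_mat X" n Y] assms by (simp add: sum.cartesian_product case_prod_beta)

lemma tr_CS: assumes "X \<in> carrier_mat n n" "Y \<in> carrier_mat n n"
  shows "(tr (transpose_mat X * Y))^2 \<le> tr (transpose_mat X * X) * tr (transpose_mat Y * Y)"
  unfolding tr_ATB[OF assms] tr_ATB[OF assms(1,1)] tr_ATB[OF assms(2,2)]
  using sum_CS[of "\<lambda>p. X $$ (snd p, fst p)" "\<lambda>p. Y $$ (snd p, fst p)"] by (simp add: power2_eq_square)

lemma tr_ATA_nonneg: assumes "X \<in> carrier_mat n n" shows "0 \<le> tr (transpose_mat X * X)"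
  unfolding tr_ATB[OF assms assms] by (intro sum_nonneg) auto

definition q :: "nat \<Rightarrow> real mat \<Rightarrow> real" where
  "q j A = tr ((transpose_mat A * A) ^\<^sub>m (2^j))"
definition nr :: "nat \<Rightarrow> real mat \<Rightarrow> real" where
  "nr j A = q j A powr (1 / 2^(Suc j))"

lemma ATA_sym: assumes "(A::real mat) \<in> carrier_mat n n"
  shows "transpose_mat (transpose_mat A * A) = transpose_mat A * A"
  using assms transpose_mult[of "transpose_mat A" n n A n] by simp

lemma q_nonneg: assumes A: "A \<in> carrier_mat n n" shows "0 \<le> q j A"
proof (cases j)
  case 0 then show ?thesis using tr_ATA_nonneg[OF A] by (simp add: q_def)
next
  case (Suc i)
  define S where "S = transpose_mat A * A"
  have S: "S \<in> carrier_mat n n" using A by (simp add: S_def)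
  have "S ^\<^sub>m (2^j) = S ^\<^sub>m (2^i) * S ^\<^sub>m (2^i)" using pow_mat_add[OF S, of "2^i" "2^i"] Suc by (simp add: mult_2)
  also have "\<dots> = transpose_mat (S ^\<^sub>m (2^i)) * S ^\<^sub>m (2^i)"
    using transpose_pow[OF S] ATA_sym[OF A] by (simp add: S_def)
  finally have "q j A = tr (transpose_mat (S ^\<^sub>m (2^i)) * S ^\<^sub>m (2^i))" by (simp add: q_def S_def)
  then show ?thesis using tr_ATA_nonneg[of "S ^\<^sub>m (2^i)" n] S by simp
qed

lemma tr_AAT_pow: assumes A: "A \<in> carrier_mat n n"
  shows "tr ((A * transpose_mat A) ^\<^sub>m (Suc k)) = tr ((transpose_mat A * A) ^\<^sub>m (Suc k))"
proof -
  let ?T = "transpose_mat A"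
  have T: "?T \<in> carrier_mat n n" using A by simp
  define Z where "Z = (?T * A) ^\<^sub>m k"
  have Z: "Z \<in> carrier_mat n n" using A by (simp add: Z_def)
  have "(A * ?T) ^\<^sub>m (Suc k) = ((A * ?T) ^\<^sub>m k * A) * ?T"
    using A by (simp add: assoc_mult_mat[of _ n n _ n _ n])
  also have "\<dots> = A * (Z * ?T)" unfolding pow_shift[OF A T] Z_def
    using A by (simp add: assoc_mult_mat[of _ n n _ n _ n])
  finally have "tr ((A * ?T) ^\<^sub>m (Suc k)) = tr ((Z * ?T) * A)"
    using tr_comm[OF A, of "Z * ?T"] Z T by simp
  also have "\<dots> = tr (Z * (?T * A))" using Z A by (simp add: assoc_mult_mat[of _ n n _ n _ n])
  also have "\<dots> = tr ((?T * A) ^\<^sub>m (Suc k))" by (simp add: Z_def)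
  finally show ?thesis .
qed

lemma q_transpose: assumes A: "A \<in> carrier_mat n n" shows "q j (transpose_mat A) = q j A"
proof -
  have "(2::nat)^j = Suc (2^j - 1)" by simp
  then show ?thesis unfolding q_def using tr_AAT_pow[OF A, of "2^j - 1"] by simp
qed

lemma q_ATA: assumes A: "A \<in> carrier_mat n n" shows "q j (transpose_mat A * A) = q (Suc j) A"
proof -
  define S where "S = transpose_mat A * A"
  have S: "S \<in> carrier_mat n n" using A by (simp add: S_def)
  have "(transpose_mat S * S) ^\<^sub>m (2^j) = (S ^\<^sub>m 2) ^\<^sub>m (2^j)"
    using ATA_sym[OF A] S by (simp add: S_def numeral_2_eq_2)
  also have "\<dots> = S ^\<^sub>m (2^Suc j)" using pow_mat_mult[OF S, of 2 "2^j"] by simp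
  finally show ?thesis unfolding q_def S_def by simp
qed

lemma root_pow: assumes "0 \<le> (x::real)" shows "(x powr (1 / 2^k)) ^ (2^k) = x"
proof (cases "x = 0")
  case False
  then have "(x powr (1 / 2^k)) ^ (2^k) = (x powr (1 / 2^k)) powr (real (2^k))"
    using assms by (subst powr_realpow) auto
  also have "\<dots> = x" using assms by (simp add: powr_powr)
  finally show ?thesis .
qed simp

lemma root_sq: assumes "0 \<le> (x::real)" shows "(x powr (1 / 2^Suc k)) ^ 2 = x powr (1 / 2^k)"
proof (cases "x = 0")
  case False
  then have "(x powr (1 / 2^Suc k)) ^ 2 = (x powr (1 / 2^Suc k)) powr (real 2)"
    using assms by (subst powr_realpow) auto
  also have "\<dots> = x powr (1 / 2^k)" by (simp add: powr_powr)
  finally show ?thesis .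
qed simp

lemma nr_nonneg: "0 \<le> nr j A" by (simp add: nr_def)

lemma nr_pow: assumes A: "A \<in> carrier_mat n n" shows "nr j A ^ (2^Suc j) = q j A"
  unfolding nr_def using root_pow[OF q_nonneg[OF A, of j], of "Suc j"] .

lemma nr_transpose: assumes A: "A \<in> carrier_mat n n" shows "nr j (transpose_mat A) = nr j A"
  unfolding nr_def q_transpose[OF A] ..

lemma nr_ATA: assumes A: "A \<in> carrier_mat n n" shows "nr j (transpose_mat A * A) = (nr (Suc j) A)^2"
  unfolding nr_def q_ATA[OF A] using root_sq[OF q_nonneg[OF A, of "Suc j"], of "Suc j"] by simp

lemma tr_pow_comm: assumes X: "(X::real mat) \<in> carrier_mat n n" and Y: "Y \<in> carrier_mat n n"
  shows "tr ((X * Y) ^\<^sub>m (Suc k)) = tr ((Y * X) ^\<^sub>m (Suc k))"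
proof -
  define Z where "Z = (Y * X) ^\<^sub>m k"
  have Z: "Z \<in> carrier_mat n n" using X Y by (simp add: Z_def)
  have "(X * Y) ^\<^sub>m (Suc k) = ((X * Y) ^\<^sub>m k * X) * Y"
    using X Y by (simp add: assoc_mult_mat[of _ n n _ n _ n])
  also have "\<dots> = X * (Z * Y)" unfolding pow_shift[OF X Y] Z_def
    using X Y by (simp add: assoc_mult_mat[of _ n n _ n _ n])
  finally have "tr ((X * Y) ^\<^sub>m (Suc k)) = tr ((Z * Y) * X)"
    using tr_comm[OF X, of "Z * Y"] Z Y by simp
  also have "\<dots> = tr (Z * (Y * X))" using Z X Y by (simp add: assoc_mult_mat[of _ n n _ n _ n])
  also have "\<dots> = tr ((Y * X) ^\<^sub>m (Suc k))" by (simp add: Z_def)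
  finally show ?thesis .
qed

lemma tr_sq_le: assumes W: "W \<in> carrier_mat n n"
  shows "tr (W * W) \<le> nr 0 W ^ 2"
proof -
  have "(tr (transpose_mat (transpose_mat W) * W))^2 \<le> tr (transpose_mat (transpose_mat W) * transpose_mat W) * tr (transpose_mat W * W)"
    using tr_CS[of "transpose_mat W" n W] W by simp
  also have "tr (transpose_mat (transpose_mat W) * transpose_mat W) = tr (transpose_mat W * W)"
    using tr_comm[of W n "transpose_mat W"] W by simp
  finally have "(tr (W * W))^2 \<le> (tr (transpose_mat W * W))^2" by (simp add: power2_eq_square)
  then have "tr (W * W) \<le> tr (transpose_mat W * W)"
    using tr_ATA_nonneg[OF W] by (metis abs_le_square_iff abs_le_D1 abs_of_nonneg)
  also have "\<dots> = nr 0 W ^ 2" using nr_pow[OF W, of 0] by (simp add: q_def)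
  finally show ?thesis .
qed

lemma pow_le_base: "a^n \<le> b^n \<Longrightarrow> 0 \<le> b \<Longrightarrow> 0 < n \<Longrightarrow> a \<le> (b::real)"
  by (cases n) (auto intro: power_le_imp_le_base)

definition holder :: "nat \<Rightarrow> bool" where
  "holder j \<longleftrightarrow> (\<forall>n A B. A \<in> carrier_mat n n \<longrightarrow> B \<in> carrier_mat n n \<longrightarrow>
      nr j (A * B) \<le> nr (Suc j) A * nr (Suc j) B)"

lemma holder_pow: assumes H: "\<And>k. i \<le> k \<Longrightarrow> k < i + l \<Longrightarrow> holder k"
  and C: "C \<in> carrier_mat n n"
  shows "nr i (C ^\<^sub>m (2^l)) \<le> nr (i + l) C ^ (2^l)"
  using H
proof (induct l arbitrary: i)
  case 0 then show ?case by simp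
next
  case (Suc l)
  define X where "X = C ^\<^sub>m (2^l)"
  have X: "X \<in> carrier_mat n n" using C by (simp add: X_def)
  have "C ^\<^sub>m (2^Suc l) = X * X" unfolding X_def using pow_mat_add[OF C, of "2^l" "2^l"] by (simp add: mult_2)
  then have "nr i (C ^\<^sub>m (2^Suc l)) \<le> nr (Suc i) X * nr (Suc i) X"
    using Suc.prems[of i] X unfolding holder_def by auto
  also have "\<dots> = nr (Suc i) X ^ 2" by (simp add: power2_eq_square)
  also have "\<dots> \<le> (nr (Suc i + l) C ^ (2^l)) ^ 2"
    using Suc.hyps[of "Suc i"] Suc.prems unfolding X_def
    by (intro power_mono) (auto simp: nr_nonneg)
  also have "\<dots> = nr (i + Suc l) C ^ (2^Suc l)" by (simp add: power_mult[symmetric] mult.commute)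
  finally show ?case .
qed

lemma holder_all: "holder j"
proof (induct j rule: less_induct)
  case (less j)
  show ?case unfolding holder_def
  proof (intro allI impI)
    fix n and A B :: "real mat" assume A: "A \<in> carrier_mat n n" and B: "B \<in> carrier_mat n n"
    let ?T = "transpose_mat :: real mat \<Rightarrow> real mat"
    define P where "P = ?T A * A"
    define Q where "Q = B * ?T B"
    have P: "P \<in> carrier_mat n n" and Q: "Q \<in> carrier_mat n n" using A B by (auto simp: P_def Q_def)
    have nP: "nr j P = nr (Suc j) A ^ 2" using nr_ATA[OF A] by (simp add: P_def)
    have nQ: "nr j Q = nr (Suc j) B ^ 2" using nr_ATA[of "?T B" n j] B nr_transpose[OF B] by (simp add: Q_def)
    have "?T (A * B) * (A * B) = ?T B * (P * B)"
      using A B by (simp add: transpose_mult[of _ n n _ n] assoc_mult_mat[of _ n n _ n _ n] P_def)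
    obtain k where k: "(2::nat)^j = Suc k" using not0_implies_Suc[of "2^j"] by auto
    then have "q j (A * B) = tr ((?T B * (P * B)) ^\<^sub>m Suc k)" using \<open>?T (A * B) * (A * B) = _\<close> by (simp add: q_def)
    also have "\<dots> = tr (((P * B) * ?T B) ^\<^sub>m Suc k)" using tr_pow_comm[of "?T B" n "P * B"] B P by simp
    also have "(P * B) * ?T B = P * Q" using P B by (simp add: assoc_mult_mat[of _ n n _ n _ n] Q_def)
    finally have qe: "q j (A * B) = tr ((P * Q) ^\<^sub>m (2^j))" unfolding k .
    have key: "q j (A * B) \<le> (nr j P * nr j Q) ^ (2^j)"
    proof (cases j)
      case 0
      have "(tr (?T P * Q))^2 \<le> tr (?T P * P) * tr (?T Q * Q)" using tr_CS[OF P Q] .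
      also have "\<dots> = (nr 0 P * nr 0 Q)^2" using nr_pow[OF P, of 0] nr_pow[OF Q, of 0]
        by (simp add: q_def power_mult_distrib)
      finally have "tr (?T P * Q) \<le> nr 0 P * nr 0 Q"
        using nr_nonneg by (metis abs_le_square_iff abs_le_D1 abs_of_nonneg mult_nonneg_nonneg)
      moreover have "?T P = P" using A by (simp add: P_def ATA_sym)
      ultimately show ?thesis using qe 0 by simp
    next
      case (Suc i)
      define C where "C = P * Q"
      have C: "C \<in> carrier_mat n n" using P Q by (simp add: C_def)
      define W where "W = C ^\<^sub>m (2^i)"
      have W: "W \<in> carrier_mat n n" using C by (simp add: W_def)
      have "C ^\<^sub>m (2^j) = W * W" unfolding W_def Suc using pow_mat_add[OF C, of "2^i" "2^i"] by (simp add: mult_2)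
      then have "q j (A * B) \<le> nr 0 W ^ 2" using qe tr_sq_le[OF W] by (simp add: C_def)
      also have "\<dots> \<le> (nr i C ^ (2^i))^2"
        using holder_pow[of 0 i C n] less Suc C unfolding W_def by (intro power_mono) (auto simp: nr_nonneg)
      also have "\<dots> \<le> ((nr j P * nr j Q) ^ (2^i))^2"
        using less[of i] Suc P Q unfolding holder_def C_def
        by (intro power_mono) (auto simp: nr_nonneg)
      also have "\<dots> = (nr j P * nr j Q) ^ (2^j)" using Suc by (simp add: power_mult[symmetric] mult.commute)
      finally show ?thesis .
    qed
    have "nr j (A * B) ^ (2^Suc j) = q j (A * B)" using nr_pow[of "A * B" n j] A B by simp
    also have "\<dots> \<le> (nr (Suc j) A * nr (Suc j) B) ^ (2^Suc j)"
      using key unfolding nP nQ by (simp add: power_mult[symmetric] power_mult_distrib mult.commute)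
    finally show "nr j (A * B) \<le> nr (Suc j) A * nr (Suc j) B"
      by (rule pow_le_base) (auto simp: nr_nonneg)
  qed
qed

lemma expand_sq: assumes A: "(A::real mat) \<in> carrier_mat n n" and B: "B \<in> carrier_mat n n"
  shows "transpose_mat (A + B) * (A + B) =
    transpose_mat A * A + transpose_mat A * B + transpose_mat B * A + transpose_mat B * B"
proof -
  have "transpose_mat (A + B) * (A + B) = (transpose_mat A + transpose_mat B) * (A + B)"
    using transpose_add[OF A B] by simp
  also have "\<dots> = transpose_mat A * (A + B) + transpose_mat B * (A + B)"
    using A B by (intro add_mult_distrib_mat[of _ n n]) auto
  also have "\<dots> = (transpose_mat A * A + transpose_mat A * B) + (transpose_mat B * A + transpose_mat B * B)"
    using A B by (simp add: mult_add_distrib_mat[of _ n n])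
  finally show ?thesis using A B by (simp add: assoc_add_mat[of _ n n])
qed

lemma nr0_sq: assumes "X \<in> carrier_mat n n" shows "nr 0 X ^ 2 = tr (transpose_mat X * X)"
  using nr_pow[OF assms, of 0] by (simp add: q_def)

lemma triangle: assumes A: "(A::real mat) \<in> carrier_mat n n" and B: "B \<in> carrier_mat n n"
  shows "nr j (A + B) \<le> nr j A + nr j B"
  using A B
proof (induct j arbitrary: A B)
  case 0
  let ?T = "transpose_mat :: real mat \<Rightarrow> real mat"
  note A = "0.prems"(1) and B = "0.prems"(2)
  have "tr (?T B * A) = tr (?T (?T B * A))" using A B by (simp add: tr_transpose[of _ n])
  also have "\<dots> = tr (?T A * B)" using A B by (simp add: transpose_mult[of _ n n _ n])
  finally have ba: "tr (?T B * A) = tr (?T A * B)" .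
  have "(tr (?T A * B))^2 \<le> (nr 0 A * nr 0 B)^2" using tr_CS[OF A B] nr0_sq[OF A] nr0_sq[OF B]
    by (simp add: power_mult_distrib)
  then have cs: "tr (?T A * B) \<le> nr 0 A * nr 0 B"
    using nr_nonneg by (metis abs_le_square_iff abs_le_D1 abs_of_nonneg mult_nonneg_nonneg)
  have "nr 0 (A + B) ^ 2 = tr (?T A * A) + tr (?T A * B) + tr (?T B * A) + tr (?T B * B)"
    using nr0_sq[of "A + B" n] A B by (simp add: expand_sq tr_add[of _ n])
  also have "\<dots> \<le> (nr 0 A + nr 0 B)^2" using ba cs nr0_sq[OF A] nr0_sq[OF B]
    by (simp add: power2_sum)
  finally show ?case by (rule pow_le_base) (auto simp: nr_nonneg)
next
  case (Suc j)
  let ?T = "transpose_mat :: real mat \<Rightarrow> real mat"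
  note A = Suc.prems(1) and B = Suc.prems(2)
  have h: "holder j" by (rule holder_all)
  have "nr (Suc j) (A + B) ^ 2 = nr j (?T A * A + ?T A * B + ?T B * A + ?T B * B)"
    using nr_ATA[of "A + B" n j] A B by (simp add: expand_sq)
  also have "\<dots> \<le> nr j (?T A * A) + nr j (?T A * B) + nr j (?T B * A) + nr j (?T B * B)"
  proof -
    have "nr j (?T A * A + ?T A * B + ?T B * A + ?T B * B) \<le> nr j (?T A * A + ?T A * B + ?T B * A) + nr j (?T B * B)"
      using Suc.hyps A B by auto
    also have "\<dots> \<le> nr j (?T A * A + ?T A * B) + nr j (?T B * A) + nr j (?T B * B)"
      using Suc.hyps[of "?T A * A + ?T A * B" "?T B * A"] A B by auto
    also have "\<dots> \<le> nr j (?T A * A) + nr j (?T A * B) + nr j (?T B * A) + nr j (?T B * B)"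
      using Suc.hyps[of "?T A * A" "?T A * B"] A B by auto
    finally show ?thesis .
  qed
  also have "\<dots> \<le> nr (Suc j) A ^ 2 + nr (Suc j) A * nr (Suc j) B + nr (Suc j) B * nr (Suc j) A + nr (Suc j) B ^ 2"
    using h[unfolded holder_def, rule_format, of "?T A" n B] h[unfolded holder_def, rule_format, of "?T B" n A]
      nr_transpose[OF A, of "Suc j"] nr_transpose[OF B, of "Suc j"] nr_ATA[OF A, of j] nr_ATA[OF B, of j] A B
    by (simp add: mult.commute)
  also have "\<dots> = (nr (Suc j) A + nr (Suc j) B)^2" by (simp add: power2_sum)
  finally show ?case by (rule pow_le_base) (auto simp: nr_nonneg)
qed


definition lo :: "real mat \<Rightarrow> real mat" where
  "lo M = mat (dim_row M) (dim_col M) (\<lambda>(i, j). if j < i then M $$ (i, j) else 0)"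

lemma ut_dims[simp]: "dim_row (upper_trunc M) = dim_row M" "dim_col (upper_trunc M) = dim_col M"
  by (simp_all add: upper_trunc_def)
lemma lo_dims[simp]: "dim_row (lo M) = dim_row M" "dim_col (lo M) = dim_col M"
  by (simp_all add: lo_def)
lemma ut_carrier[simp]: "X \<in> carrier_mat n n \<Longrightarrow> upper_trunc X \<in> carrier_mat n n"
  by (intro carrier_matI) auto
lemma lo_carrier[simp]: "X \<in> carrier_mat n n \<Longrightarrow> lo X \<in> carrier_mat n n"
  by (intro carrier_matI) auto
lemma ut_index: "X \<in> carrier_mat n n \<Longrightarrow> i < n \<Longrightarrow> j < n \<Longrightarrow> upper_trunc X $$ (i,j) = (if i \<le> j then X $$ (i,j) else 0)"
  by (simp add: upper_trunc_def)
lemma lo_index: "X \<in> carrier_mat n n \<Longrightarrow> i < n \<Longrightarrow> j < n \<Longrightarrow> lo X $$ (i,j) = (if j < i then X $$ (i,j) else 0)"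
  by (simp add: lo_def)

lemma ut_term1: assumes X: "X \<in> carrier_mat n n" and "l < n" "i < n" "k < n" "k < i"
  shows "X $$ (l,i) * upper_trunc X $$ (l,k) = upper_trunc X $$ (l,i) * upper_trunc X $$ (l,k)"
  using assms by (simp add: ut_index[OF X])
lemma ut_term2: assumes X: "X \<in> carrier_mat n n" and "l < n" "i < n" "k < n" "\<not> k < i"
  shows "X $$ (l,k) * upper_trunc X $$ (l,i) = upper_trunc X $$ (l,i) * upper_trunc X $$ (l,k)"
  using assms by (simp add: ut_index[OF X])
lemma lo_term1: assumes X: "X \<in> carrier_mat n n" and "l < n" "i < n" "k < n" "k \<le> i"
  shows "lo X $$ (l,i) * X $$ (l,k) = lo X $$ (l,i) * lo X $$ (l,k)"
  using assms by (simp add: lo_index[OF X])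
lemma lo_term2: assumes X: "X \<in> carrier_mat n n" and "l < n" "i < n" "k < n" "\<not> k \<le> i"
  shows "lo X $$ (l,k) * X $$ (l,i) = lo X $$ (l,i) * lo X $$ (l,k)"
  using assms by (simp add: lo_index[OF X])

lemma TA_index: assumes "(X::real mat) \<in> carrier_mat n n" "Y \<in> carrier_mat n n" "i < n" "k < n"
  shows "(transpose_mat X * Y) $$ (i,k) = (\<Sum>l<n. X $$ (l,i) * Y $$ (l,k))"
  using assms by (simp add: scalar_prod_def atLeast0LessThan)

lemma ut_id: assumes X: "X \<in> carrier_mat n n"
  defines "A \<equiv> upper_trunc X"
  defines "Y \<equiv> transpose_mat X * A"
  shows "transpose_mat A * A = lo Y + upper_trunc (transpose_mat Y)"
proof -
  have A: "A \<in> carrier_mat n n" using X by (simp add: A_def)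
  have Y: "Y \<in> carrier_mat n n" using X A by (simp add: Y_def)
  show ?thesis
  proof (rule eq_matI)
    fix i k assume i: "i < dim_row (lo Y + upper_trunc (transpose_mat Y))"
      and k: "k < dim_col (lo Y + upper_trunc (transpose_mat Y))"
    then have i: "i < n" and k: "k < n" using Y by auto
    have AA: "(transpose_mat A * A) $$ (i,k) = (\<Sum>l<n. A $$ (l,i) * A $$ (l,k))" using TA_index[OF A A i k] .
    show "(transpose_mat A * A) $$ (i,k) = (lo Y + upper_trunc (transpose_mat Y)) $$ (i,k)"
    proof (cases "k < i")
      case True
      have "(lo Y + upper_trunc (transpose_mat Y)) $$ (i,k) = Y $$ (i,k)"
        using Y i k True by (simp add: lo_index[OF Y] ut_index[of "transpose_mat Y" n])
      also have "\<dots> = (\<Sum>l<n. X $$ (l,i) * A $$ (l,k))" unfolding Y_def using TA_index[OF X A i k] .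
      also have "\<dots> = (\<Sum>l<n. A $$ (l,i) * A $$ (l,k))"
        unfolding A_def using ut_term1[OF X _ i k True] by (intro sum.cong refl) simp
      finally show ?thesis using AA by simp
    next
      case False
      have "(lo Y + upper_trunc (transpose_mat Y)) $$ (i,k) = Y $$ (k,i)"
        using Y i k False by (simp add: lo_index[OF Y] ut_index[of "transpose_mat Y" n])
      also have "\<dots> = (\<Sum>l<n. X $$ (l,k) * A $$ (l,i))" unfolding Y_def using TA_index[OF X A k i] .
      also have "\<dots> = (\<Sum>l<n. A $$ (l,i) * A $$ (l,k))"
        unfolding A_def using ut_term2[OF X _ i k False] by (intro sum.cong refl) simp
      finally show ?thesis using AA by simp
    qed
  qed (use Y A in simp_all)
qed

lemma lo_id: assumes X: "X \<in> carrier_mat n n"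
  defines "B \<equiv> lo X"
  defines "Y \<equiv> transpose_mat B * X"
  shows "transpose_mat B * B = transpose_mat (upper_trunc (transpose_mat Y)) + transpose_mat (lo Y)"
proof -
  have B: "B \<in> carrier_mat n n" using X by (simp add: B_def)
  have Y: "Y \<in> carrier_mat n n" using X B by (simp add: Y_def)
  show ?thesis
  proof (rule eq_matI)
    fix i k assume i: "i < dim_row (transpose_mat (upper_trunc (transpose_mat Y)) + transpose_mat (lo Y))"
      and k: "k < dim_col (transpose_mat (upper_trunc (transpose_mat Y)) + transpose_mat (lo Y))"
    then have i: "i < n" and k: "k < n" using Y by auto
    have BB: "(transpose_mat B * B) $$ (i,k) = (\<Sum>l<n. B $$ (l,i) * B $$ (l,k))" using TA_index[OF B B i k] .
    show "(transpose_mat B * B) $$ (i,k) = (transpose_mat (upper_trunc (transpose_mat Y)) + transpose_mat (lo Y)) $$ (i,k)"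
    proof (cases "k \<le> i")
      case True
      have "(transpose_mat (upper_trunc (transpose_mat Y)) + transpose_mat (lo Y)) $$ (i,k) = Y $$ (i,k)"
        using Y i k True by (simp add: lo_index[OF Y] ut_index[of "transpose_mat Y" n])
      also have "\<dots> = (\<Sum>l<n. B $$ (l,i) * X $$ (l,k))" unfolding Y_def using TA_index[OF B X i k] .
      also have "\<dots> = (\<Sum>l<n. B $$ (l,i) * B $$ (l,k))"
        unfolding B_def using lo_term1[OF X _ i k True] by (intro sum.cong refl) simp
      finally show ?thesis using BB by simp
    next
      case False
      have "(transpose_mat (upper_trunc (transpose_mat Y)) + transpose_mat (lo Y)) $$ (i,k) = Y $$ (k,i)"
        using Y i k False by (simp add: lo_index[OF Y] ut_index[of "transpose_mat Y" n])
      also have "\<dots> = (\<Sum>l<n. B $$ (l,k) * X $$ (l,i))" unfolding Y_def using TA_index[OF B X k i] .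
      also have "\<dots> = (\<Sum>l<n. B $$ (l,i) * B $$ (l,k))"
        unfolding B_def using lo_term2[OF X _ i k False] by (intro sum.cong refl) simp
      finally show ?thesis using BB by simp
    qed
  qed (use Y B in simp_all)
qed


lemma sq_le_imp: assumes "a^2 \<le> c * a" "0 \<le> (a::real)" "0 \<le> c" shows "a \<le> c"
proof (cases "a = 0")
  case False
  then have "a * a \<le> c * a" using assms by (simp add: power2_eq_square)
  then show ?thesis using False assms(2) by (simp add: mult_le_cancel_right)
qed (use assms in simp)

lemma nr0_entry_le: assumes X: "X \<in> carrier_mat n n" and Z: "Z \<in> carrier_mat n n"
  and le: "\<And>i j. i < n \<Longrightarrow> j < n \<Longrightarrow> (Z $$ (i,j))^2 \<le> (X $$ (i,j))^2"
  shows "nr 0 Z \<le> nr 0 X"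
proof -
  have "nr 0 Z ^ 2 \<le> nr 0 X ^ 2"
    unfolding nr0_sq[OF X] nr0_sq[OF Z] tr_ATA[OF X] tr_ATA[OF Z]
    by (intro sum_mono) (simp add: le)
  then show ?thesis by (rule pow_le_base) (auto simp: nr_nonneg)
qed

lemma trunc_bound: assumes X: "X \<in> carrier_mat n n"
  shows "nr j (upper_trunc X) \<le> 2^j * nr j X \<and> nr j (lo X) \<le> 2^j * nr j X"
  using X
proof (induct j arbitrary: n X)
  case 0
  note X = "0.prems"
  show ?case
    using nr0_entry_le[OF X ut_carrier[OF X]] nr0_entry_le[OF X lo_carrier[OF X]] X
    by (simp add: ut_index lo_index)
next
  case (Suc j)
  note X = Suc.prems
  let ?T = "transpose_mat :: real mat \<Rightarrow> real mat"
  have h: "holder j" by (rule holder_all)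
  have part1: "nr (Suc j) (upper_trunc X) \<le> 2^Suc j * nr (Suc j) X"
  proof -
    define A where "A = upper_trunc X"
    define Y where "Y = ?T X * A"
    have A: "A \<in> carrier_mat n n" using X by (simp add: A_def)
    have Y: "Y \<in> carrier_mat n n" using X A by (simp add: Y_def)
    have "nr (Suc j) A ^ 2 = nr j (lo Y + upper_trunc (?T Y))"
      using nr_ATA[OF A, of j] ut_id[OF X] by (simp add: A_def Y_def)
    also have "\<dots> \<le> nr j (lo Y) + nr j (upper_trunc (?T Y))"
      using triangle[of "lo Y" n "upper_trunc (?T Y)"] Y by simp
    also have "\<dots> \<le> 2^j * nr j Y + 2^j * nr j (?T Y)"
      using Suc.hyps[of Y n] Suc.hyps[of "?T Y" n] Y by (intro add_mono) auto
    also have "\<dots> = 2^Suc j * nr j Y" using nr_transpose[OF Y] by simp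
    also have "\<dots> \<le> 2^Suc j * (nr (Suc j) X * nr (Suc j) A)"
      using h[unfolded holder_def, rule_format, of "?T X" n A] X A nr_transpose[OF X, of "Suc j"]
      by (simp add: Y_def)
    finally have "nr (Suc j) A ^ 2 \<le> (2^Suc j * nr (Suc j) X) * nr (Suc j) A" by (simp add: mult.assoc)
    then show ?thesis unfolding A_def[symmetric]
      by (rule sq_le_imp) (auto simp: nr_nonneg)
  qed
  have part2: "nr (Suc j) (lo X) \<le> 2^Suc j * nr (Suc j) X"
  proof -
    define B where "B = lo X"
    define Y where "Y = ?T B * X"
    have B: "B \<in> carrier_mat n n" using X by (simp add: B_def)
    have Y: "Y \<in> carrier_mat n n" using X B by (simp add: Y_def)
    have "nr (Suc j) B ^ 2 = nr j (?T (upper_trunc (?T Y)) + ?T (lo Y))"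
      using nr_ATA[OF B, of j] lo_id[OF X] by (simp add: B_def Y_def)
    also have "\<dots> \<le> nr j (?T (upper_trunc (?T Y))) + nr j (?T (lo Y))"
      using triangle[of "?T (upper_trunc (?T Y))" n "?T (lo Y)"] Y by simp
    also have "\<dots> = nr j (upper_trunc (?T Y)) + nr j (lo Y)"
      using Y by (simp add: nr_transpose[of _ n])
    also have "\<dots> \<le> 2^j * nr j (?T Y) + 2^j * nr j Y"
      using Suc.hyps[of Y n] Suc.hyps[of "?T Y" n] Y by (intro add_mono) auto
    also have "\<dots> = 2^Suc j * nr j Y" using nr_transpose[OF Y] by simp
    also have "\<dots> \<le> 2^Suc j * (nr (Suc j) B * nr (Suc j) X)"
      using h[unfolded holder_def, rule_format, of "?T B" n X] X B nr_transpose[OF B, of "Suc j"]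
      by (simp add: Y_def)
    finally have "nr (Suc j) B ^ 2 \<le> (2^Suc j * nr (Suc j) X) * nr (Suc j) B" by (simp add: mult_ac)
    then show ?thesis unfolding B_def[symmetric]
      by (rule sq_le_imp) (auto simp: nr_nonneg)
  qed
  show ?case using part1 part2 by simp
qed


interpretation of_real_poly_hom: map_poly_inj_idom_hom "of_real :: real \<Rightarrow> complex" ..

lemma sym_eig_real: assumes S: "S \<in> carrier_mat n n" and sym: "transpose_mat S = S"
  and ev: "eigenvalue (map_mat (of_real :: real \<Rightarrow> complex) S) a"
  shows "Im a = 0"
proof -
  let ?Sc = "map_mat (of_real :: real \<Rightarrow> complex) S"
  obtain v where v: "v \<in> carrier_vec n" and v0: "v \<noteq> 0\<^sub>v n" and Sv: "?Sc *\<^sub>v v = a \<cdot>\<^sub>v v"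
    using ev S unfolding eigenvalue_def eigenvector_def by auto
  have Sij: "S $$ (i,j) = S $$ (j,i)" if "i < n" "j < n" for i j
    using sym that S by (metis carrier_matD(1) carrier_matD(2) index_transpose_mat(1))
  have row: "(\<Sum>j<n. of_real (S $$ (i,j)) * v $ j) = a * v $ i" if i: "i < n" for i
  proof -
    have "(?Sc *\<^sub>v v) $ i = (a \<cdot>\<^sub>v v) $ i" using Sv by simp
    then show ?thesis using i v S by (simp add: scalar_prod_def atLeast0LessThan)
  qed
  define s where "s = (\<Sum>i<n. \<Sum>j<n. cnj (v $ i) * (of_real (S $$ (i,j)) * v $ j))"
  define N where "N = (\<Sum>i<n. (cmod (v $ i))^2)"
  have s1: "s = a * of_real N"
  proof -
    have "s = (\<Sum>i<n. cnj (v $ i) * (a * v $ i))" unfolding s_def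
      by (intro sum.cong refl) (simp add: sum_distrib_left[symmetric] row)
    also have "\<dots> = a * (\<Sum>i<n. cnj (v $ i) * v $ i)" by (simp add: sum_distrib_left mult_ac)
    also have "(\<Sum>i<n. cnj (v $ i) * v $ i) = of_real N" unfolding N_def of_real_sum
      by (intro sum.cong refl) (metis complex_norm_square mult.commute)
    finally show ?thesis .
  qed
  have "cnj s = (\<Sum>i<n. \<Sum>j<n. v $ i * (of_real (S $$ (i,j)) * cnj (v $ j)))"
    unfolding s_def by simp
  also have "\<dots> = (\<Sum>j<n. \<Sum>i<n. v $ i * (of_real (S $$ (i,j)) * cnj (v $ j)))" by (rule sum.swap)
  also have "\<dots> = s" unfolding s_def
    by (intro sum.cong refl) (simp add: Sij mult_ac)
  finally have "cnj s = s" .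
  then have "Im s = - Im s" using cnj.sel(2)[of s] by (simp only:)
  then have "Im s = 0" by simp
  then have "Im a * N = 0" using s1 by simp
  moreover have "N > 0"
  proof -
    obtain i where i: "i < n" and vi: "v $ i \<noteq> 0" using v v0 by (metis eq_vecI carrier_vecD index_zero_vec(1,2))
    have "(cmod (v $ i))^2 \<le> N" unfolding N_def using i
      by (intro member_le_sum) auto
    moreover have "0 < (cmod (v $ i))^2" using vi by simp
    ultimately show ?thesis by linarith
  qed
  ultimately show ?thesis by simp
qed

lemma sym_split: assumes S: "(S :: real mat) \<in> carrier_mat n n" and sym: "transpose_mat S = S"
  shows "\<exists>es. char_poly S = (\<Prod>e\<leftarrow>es. [:- e, 1:])"
proof -
  let ?Sc = "map_mat (of_real :: real \<Rightarrow> complex) S"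
  have Sc: "?Sc \<in> carrier_mat n n" using S by simp
  obtain as where as: "char_poly ?Sc = (\<Prod>a\<leftarrow>as. [:- a, 1:])" using char_poly_factorized[OF Sc] by auto
  have re: "a = of_real (Re a)" if a: "a \<in> set as" for a
  proof -
    have "poly (char_poly ?Sc) a = 0" unfolding as using a
      by (induct as) (auto simp: poly_prod_list)
    then have "eigenvalue ?Sc a" using eigenvalue_root_char_poly[OF Sc] by simp
    then have "Im a = 0" using sym_eig_real[OF S sym] by simp
    then show ?thesis by (simp add: complex_eq_iff)
  qed
  define es where "es = map Re as"
  have "map_poly of_real (\<Prod>e\<leftarrow>es. [:- e, 1:]) = (\<Prod>a\<leftarrow>as. [:- a, 1:])"
    unfolding es_def of_real_poly_hom.hom_prod_list using re
    by (induct as) (auto simp: of_real_poly_hom.hom_prod_list)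
  also have "\<dots> = char_poly ?Sc" using as by simp
  also have "\<dots> = map_poly of_real (char_poly S)" by (rule of_real_hom.char_poly_hom[OF S])
  finally have "(\<Prod>e\<leftarrow>es. [:- e, 1:]) = char_poly S" by simp
  then show ?thesis by metis
qed


lemma ATA_eig_nonneg: assumes M: "(M::real mat) \<in> carrier_mat n n"
  and e: "poly (char_poly (transpose_mat M * M)) e = 0"
  shows "0 \<le> e"
proof -
  let ?S = "transpose_mat M * M"
  have S: "?S \<in> carrier_mat n n" using M by simp
  have "eigenvalue ?S e" using eigenvalue_root_char_poly[OF S] e by simp
  then obtain v where v: "v \<in> carrier_vec n" and v0: "v \<noteq> 0\<^sub>v n" and Sv: "?S *\<^sub>v v = e \<cdot>\<^sub>v v"
    using S unfolding eigenvalue_def eigenvector_def by auto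
  define w where "w = M *\<^sub>v v"
  have w: "w \<in> carrier_vec n" using M v by (simp add: w_def)
  have "?S *\<^sub>v v = transpose_mat M *\<^sub>v w" unfolding w_def using M v
    by (simp add: assoc_mult_mat_vec[of _ n n _ n])
  moreover have "(e \<cdot>\<^sub>v v) \<bullet> v = e * (v \<bullet> v)" using v by simp
  ultimately have "e * (v \<bullet> v) = (transpose_mat M *\<^sub>v w) \<bullet> v"
    using Sv by simp
  also have "\<dots> = w \<bullet> (M *\<^sub>v v)" using transpose_vec_mult_scalar[OF M v w] .
  also have "\<dots> = w \<bullet> w" by (simp add: w_def)
  finally have ee: "e * (v \<bullet> v) = w \<bullet> w" .
  have "0 \<le> w \<bullet> w" unfolding scalar_prod_def by (intro sum_nonneg) auto
  moreover have "0 < v \<bullet> v"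
  proof -
    obtain i where i: "i < n" and vi: "v $ i \<noteq> 0" using v v0 by (metis eq_vecI carrier_vecD index_zero_vec(1,2))
    have "v $ i * v $ i \<le> v \<bullet> v" unfolding scalar_prod_def using i v
      by (intro member_le_sum) auto
    moreover have "0 < v $ i * v $ i" using vi by (metis not_real_square_gt_zero)
    ultimately show ?thesis by linarith
  qed
  ultimately show ?thesis using ee by (metis zero_le_mult_iff not_le)
qed

lemma ut_mult: assumes X: "(X::real mat) \<in> carrier_mat n n" and Y: "Y \<in> carrier_mat n n"
  and uX: "upper_triangular X" and uY: "upper_triangular Y"
  shows "upper_triangular (X * Y) \<and> (\<forall>i<n. (X * Y) $$ (i,i) = X $$ (i,i) * Y $$ (i,i))"
proof
  show "upper_triangular (X * Y)"
  proof (rule upper_triangularI)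
    fix i j assume ji: "j < i" and i: "i < dim_row (X * Y)"
    then have i: "i < n" using X by simp
    have "(X * Y) $$ (i,j) = (\<Sum>l<n. X $$ (i,l) * Y $$ (l,j))"
      using X Y i ji by (simp add: scalar_prod_def atLeast0LessThan)
    also have "\<dots> = 0"
    proof (intro sum.neutral ballI)
      fix l assume l: "l \<in> {..<n}"
      show "X $$ (i,l) * Y $$ (l,j) = 0"
      proof (cases "l < i")
        case True then show ?thesis using upper_triangularD[OF uX True] X i by simp
      next
        case False then have "j < l" using ji by simp
        then show ?thesis using upper_triangularD[OF uY] Y l by simp
      qed
    qed
    finally show "(X * Y) $$ (i,j) = 0" .
  qed
  show "\<forall>i<n. (X * Y) $$ (i,i) = X $$ (i,i) * Y $$ (i,i)"
  proof (intro allI impI)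
    fix i assume i: "i < n"
    have "(X * Y) $$ (i,i) = (\<Sum>l<n. X $$ (i,l) * Y $$ (l,i))"
      using X Y i by (simp add: scalar_prod_def atLeast0LessThan)
    also have "\<dots> = (\<Sum>l<n. if l = i then X $$ (i,i) * Y $$ (i,i) else 0)"
    proof (intro sum.cong refl)
      fix l assume l: "l \<in> {..<n}"
      show "X $$ (i,l) * Y $$ (l,i) = (if l = i then X $$ (i,i) * Y $$ (i,i) else 0)"
        using upper_triangularD[OF uX, of l i] upper_triangularD[OF uY, of i l] X Y l i
        by (cases "l < i"; cases "l = i") auto
    qed
    also have "\<dots> = X $$ (i,i) * Y $$ (i,i)" using i by simp
    finally show "(X * Y) $$ (i,i) = X $$ (i,i) * Y $$ (i,i)" .
  qed
qed

lemma ut_pow: assumes B: "(B::real mat) \<in> carrier_mat n n" and uB: "upper_triangular B"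
  shows "upper_triangular (B ^\<^sub>m k) \<and> (\<forall>i<n. (B ^\<^sub>m k) $$ (i,i) = (B $$ (i,i))^k)"
proof (induct k)
  case 0 then show ?case using B by simp
next
  case (Suc k)
  then show ?case using ut_mult[of "B ^\<^sub>m k" n B] B uB by simp
qed

lemma tr_pow_eigs: assumes S: "(S::real mat) \<in> carrier_mat n n"
  and cp: "char_poly S = (\<Prod>e\<leftarrow>es. [:- e, 1:])"
  shows "tr (S ^\<^sub>m k) = sum_list (map (\<lambda>e. e^k) es)"
proof -
  obtain B P Q where sd: "schur_decomposition S es = (B,P,Q)" by (cases "schur_decomposition S es") auto
  from schur_decomposition[OF S cp sd] have sim: "similar_mat_wit S B P Q"
    and uB: "upper_triangular B" and dB: "diag_mat B = es" by auto
  note wd = similar_mat_witD2[OF S sim]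
  have B: "B \<in> carrier_mat n n" and P: "P \<in> carrier_mat n n"
    and Q: "Q \<in> carrier_mat n n" and QP: "Q * P = 1\<^sub>m n" by (rule wd(5), rule wd(6), rule wd(7), rule wd(2))
  have Bk: "B ^\<^sub>m k \<in> carrier_mat n n" using B by simp
  have "tr (S ^\<^sub>m k) = tr ((P * B ^\<^sub>m k) * Q)" using similar_mat_wit_pow_id[OF sim, of k] by simp
  also have "\<dots> = tr (Q * (P * B ^\<^sub>m k))" using tr_comm[of "P * B ^\<^sub>m k" n Q] P Bk Q by simp
  also have "\<dots> = tr ((Q * P) * B ^\<^sub>m k)" using P Q Bk by (simp add: assoc_mult_mat[of _ n n _ n _ n])
  also have "\<dots> = tr (B ^\<^sub>m k)" using QP left_mult_one_mat[OF Bk] by simp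
  also have "\<dots> = (\<Sum>i<n. (B $$ (i,i))^k)" unfolding tr_def using ut_pow[OF B uB, of k] B by simp
  also have "\<dots> = sum_list (map (\<lambda>e. e^k) (diag_mat B))" unfolding diag_mat_def using B
    by (simp add: sum_list_sum_nth atLeast0LessThan)
  finally show ?thesis using dB by simp
qed

lemma proots_lin: "proots (\<Prod>e\<leftarrow>es. [:- e, 1:]) = mset (es :: real list)"
proof (induct es)
  case Nil then show ?case by simp
next
  case (Cons e es)
  have nz: "(\<Prod>e\<leftarrow>es. [:- e, 1:]) \<noteq> (0 :: real poly)"
    by (auto simp: prod_list_zero_iff)
  have "proots (\<Prod>e\<leftarrow>e # es. [:- e, 1:]) = proots ([:- e, 1:] * (\<Prod>e\<leftarrow>es. [:- e, 1:]))"
    by (simp only: prod_list.Cons list.map)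
  also have "\<dots> = proots [:- e, 1:] + proots (\<Prod>e\<leftarrow>es. [:- e, 1:])"
    by (rule proots_mult) (use nz in auto)
  finally have "proots (\<Prod>e\<leftarrow>e # es. [:- e, 1:]) = proots [:- e, 1:] + proots (\<Prod>e\<leftarrow>es. [:- e, 1:])" .
  then show ?case using Cons by (simp only: proots_linear_factor) simp
qed


lemma sum_mset_list: "(\<Sum>x\<in>#mset es. f x) = sum_list (map f es)"
  by (induct es) auto

lemma root_of_prod: "e \<in> set es \<Longrightarrow> poly (\<Prod>e\<leftarrow>es. [:- e, 1:]) (e::real) = 0"
  by (induct es) (auto simp: poly_prod_list)

lemma sqrt_powr: assumes "0 \<le> (e::real)" shows "sqrt e powr ((2::real) ^ Suc j) = e ^ (2^j)"
proof (cases "e = 0")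
  case False
  then have "sqrt e powr ((2::real) ^ Suc j) = sqrt e powr (real (2 ^ Suc j))" by simp
  also have "\<dots> = sqrt e ^ (2 ^ Suc j)" using False assms by (intro powr_realpow) simp
  also have "\<dots> = (sqrt e ^ 2) ^ (2 ^ j)" by (simp add: power_mult[symmetric] mult.commute)
  also have "\<dots> = e ^ (2^j)" using assms by simp
  finally show ?thesis .
qed simp

lemma schatten_eq: assumes M: "M \<in> carrier_mat n n"
  shows "schatten_norm ((2::real) ^ Suc j) M = nr j M"
proof -
  define S where "S = transpose_mat M * M"
  have S: "S \<in> carrier_mat n n" using M by (simp add: S_def)
  have sym: "transpose_mat S = S" using ATA_sym[OF M] by (simp add: S_def)
  obtain es where cp: "char_poly S = (\<Prod>e\<leftarrow>es. [:- e, 1:])" using sym_split[OF S sym] by auto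
  have nn: "0 \<le> e" if "e \<in> set es" for e
    using ATA_eig_nonneg[OF M, of e] root_of_prod[OF that] cp by (simp add: S_def)
  have "(\<Sum>\<^sub># (image_mset (\<lambda>s. s powr ((2::real) ^ Suc j)) (singular_values M)))
      = sum_list (map (\<lambda>e. sqrt e powr ((2::real) ^ Suc j)) es)"
    unfolding singular_values_def S_def[symmetric] cp proots_lin
    by (simp add: image_mset.compositionality o_def sum_mset_list)
  also have "\<dots> = sum_list (map (\<lambda>e. e ^ (2^j)) es)"
    using nn sqrt_powr by (intro arg_cong[where f = sum_list] map_cong) auto
  also have "\<dots> = tr (S ^\<^sub>m (2^j))" using tr_pow_eigs[OF S cp] by simp
  also have "\<dots> = q j M" by (simp add: q_def S_def)
  finally show ?thesis unfolding schatten_norm_def nr_def by simp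
qed

theorem mainTheorem5:
  fixes j n :: nat and M :: "real mat"
  assumes "j \<ge> 1" and "M \<in> carrier_mat n n"
  shows "schatten_norm (2 ^ j) (upper_trunc M) \<le> 2 ^ (j - 1) * schatten_norm (2 ^ j) M"
proof -
  obtain i where j: "j = Suc i" using assms(1) by (cases j) auto
  have "schatten_norm (2 ^ j) (upper_trunc M) = nr i (upper_trunc M)"
    unfolding j using schatten_eq[of "upper_trunc M" n i] assms(2) by simp
  also have "\<dots> \<le> 2 ^ i * nr i M" using trunc_bound[OF assms(2), of i] by simp
  also have "\<dots> = 2 ^ (j - 1) * schatten_norm (2 ^ j) M"
    unfolding j using schatten_eq[OF assms(2), of i] by simp
  finally show ?thesis .
qed

end
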